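(* Let $q\in\mathbb{N}$, $p=4q$, and let $S=\{0,1,\ldots,p-1\}$. For $m,n\in S$ define $$g_p(m,n)=\mathbf{d}_{2q}\!\left(0,\ m+n\cdot(-1)^{\mathbf{d}_2(0,\frac{m}{2q})}+q\,\mathbf{d}_2\!\left(0,\tfrac{m}{2q}\right)\mathbf{d}_2\!\left(0,\tfrac{n}{2q}\right)\right)+2q\,\mathbf{d}_2\!\left(0,\ \mathbf{d}_2\!\left(0,\tfrac{m}{2q}\right)+\mathbf{d}_2\!\left(0,\tfrac{n}{2q}\right)\right).$$ Then $S$ under $g_p$ is a group isomorphic to the dicyclic group $Q_{4q}=\langle a,x\mid a^{2q}=1,\ x^2=a^q,\ xax^{-1}=a^{-1}\rangle$ of order $4q$ (nonabelian for $q\ge 2$).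
   Context: For an integer $p\ge 2$, an integer $k\ge 0$ and a real number $x$ (possibly negative), the digit function is $\mathbf{d}_p(k,x)=\lfloor x/p^k\rfloor-p\lfloor x/p^{k+1}\rfloor$. In particular $\mathbf{d}_{r}(0,y)$ for an integer $y$ is the residue of $y$ modulo $r$ in $\{0,\ldots,r-1\}$. *)

theory Defs
  imports Complex_Main "HOL-Algebra.Algebra"
begin

definition digit :: "nat \<Rightarrow> nat \<Rightarrow> real \<Rightarrow> int" where
  "digit p k x = \<lfloor>x / real p ^ k\<rfloor> - int p * \<lfloor>x / real p ^ (k + 1)\<rfloor>"

definition gp :: "nat \<Rightarrow> nat \<Rightarrow> nat \<Rightarrow> int" where
  "gp q m n =
     (let dm = digit 2 0 (real m / real (2 * q));
          dn = digit 2 0 (real n / real (2 * q))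
      in digit (2 * q) 0 (real_of_int (int m + int n * (-1) ^ nat dm + int q * dm * dn))
         + int (2 * q) * digit 2 0 (real_of_int (dm + dn)))"

definition Sgp :: "nat \<Rightarrow> nat monoid" where
  "Sgp q = \<lparr>carrier = {0..<4 * q}, monoid.mult = (\<lambda>m n. nat (gp q m n)), one = 0\<rparr>"

definition dicyclic_rels :: "('a, 'b) monoid_scheme \<Rightarrow> 'a \<Rightarrow> 'a \<Rightarrow> nat \<Rightarrow> bool" where
  "dicyclic_rels H a x q \<longleftrightarrow>
     a \<in> carrier H \<and> x \<in> carrier H \<and>
     a [^]\<^bsub>H\<^esub> (2 * q) = \<one>\<^bsub>H\<^esub> \<and>
     x [^]\<^bsub>H\<^esub> (2::nat) = a [^]\<^bsub>H\<^esub> q \<and>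
     x \<otimes>\<^bsub>H\<^esub> a \<otimes>\<^bsub>H\<^esub> inv\<^bsub>H\<^esub> x = inv\<^bsub>H\<^esub> a"

end

theory Submission
  imports Defs
begin


context group begin

lemma pow_mod_red:
  assumes b: "b \<in> carrier G" and q: "q > 0" and bN: "b [^] (2*q) = \<one>"
  shows "b [^] nat (Z mod int (2*q)) = b [^] (Z::int)"
proof -
  have "b [^] Z = b [^] (int (2*q) * (Z div int (2*q)) + Z mod int (2*q))" by simp
  also have "\<dots> = (b [^] int (2*q)) [^] (Z div int (2*q)) \<otimes> b [^] (Z mod int (2*q))"
    using b by (simp only: int_pow_mult[OF b] int_pow_pow[OF b])
  also have "\<dots> = b [^] (Z mod int (2*q))"
  proof -
    have "b [^] int (2*q) = \<one>" using bN by (simp only: int_pow_int)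
    thus ?thesis using b by simp
  qed
  also have "\<dots> = b [^] int (nat (Z mod int (2*q)))" using q by simp
  finally show ?thesis by (simp add: int_pow_int)
qed

lemma conj_pow:
  assumes b: "b \<in> carrier G" and y: "y \<in> carrier G" and yb: "y \<otimes> b = inv b \<otimes> y"
  shows "y \<otimes> b [^] (n::nat) = b [^] (- int n) \<otimes> y"
proof (induction n)
  case 0 then show ?case using y by simp
next
  case (Suc n)
  have "y \<otimes> b [^] Suc n = (y \<otimes> b [^] n) \<otimes> b" using b y by (simp add: m_assoc)
  also have "\<dots> = b [^] (- int n) \<otimes> (y \<otimes> b)" using Suc b y by (simp add: m_assoc)
  also have "\<dots> = (b [^] (- int n) \<otimes> b [^] (-1::int)) \<otimes> y" using yb b y
    by (simp add: m_assoc int_pow_neg)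
  also have "\<dots> = b [^] (- int (Suc n)) \<otimes> y" using b by (simp add: int_pow_mult[symmetric] algebra_simps)
  finally show ?case .
qed

lemma dic_mul:
  assumes b: "b \<in> carrier G" and y: "y \<in> carrier G" and q: "q > 0" and bN: "b [^] (2*q) = \<one>"
    and yy: "y \<otimes> y = b [^] q" and yb: "y \<otimes> b = inv b \<otimes> y" and d1: "d1 \<le> 1" and d2: "d2 \<le> (1::nat)"
  shows "b [^] nat ((int r1 + (if d1=0 then int r2 else - int r2) + (if d1=1 \<and> d2=1 then int q else 0)) mod int (2*q))
     \<otimes> y [^] ((d1+d2) mod 2) = (b[^]r1 \<otimes> y[^]d1) \<otimes> (b[^]r2 \<otimes> y[^]d2)"
proof -
  note red = pow_mod_red[OF b q bN]
  note cp = conj_pow[OF b y yb]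
  have red': "b [^] nat (Z mod (2 * int q)) = b [^] Z" for Z using red[of Z] by simp
  have i: "b [^] r1 = b [^] int r1" "b [^] r2 = b [^] int r2" by (simp_all add: int_pow_int)
  note [simp] = red'
  have "d1 = 0 \<or> d1 = 1" "d2 = 0 \<or> d2 = 1" using d1 d2 by auto
  then consider "d1 = 0" "d2 = 0" | "d1 = 0" "d2 = 1" | "d1 = 1" "d2 = 0" | "d1 = 1" "d2 = 1" by blast
  then show ?thesis
  proof cases
    case 1 then show ?thesis using b y by (simp add: int_pow_mult i)
  next
    case 2 then show ?thesis using b y by (simp add: int_pow_mult i m_assoc)
  next
    case 3
    have "(b[^]r1 \<otimes> y) \<otimes> b[^]r2 = b[^]r1 \<otimes> (y \<otimes> b[^]r2)" using b y by (simp add: m_assoc)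
    also have "\<dots> = b [^] (int r1 + - int r2) \<otimes> y" using b y by (simp add: cp int_pow_diff int_pow_neg_int int_pow_int m_assoc)
    finally show ?thesis using 3 b y by simp
  next
    case 4
    have "(b[^]r1 \<otimes> y) \<otimes> (b[^]r2 \<otimes> y) = b[^]r1 \<otimes> (y \<otimes> b[^]r2) \<otimes> y" using b y by (simp add: m_assoc)
    also have "\<dots> = b [^] (int r1 + - int r2) \<otimes> (y \<otimes> y)" using b y by (simp add: cp int_pow_diff int_pow_neg_int int_pow_int m_assoc)
    also have "\<dots> = b [^] (int r1 + - int r2 + int q)" using b y yy by (simp add: int_pow_mult i int_pow_int)
    finally show ?thesis using 4 b y by simp
  qed
qed

end


lemma digit_int: "N > 0 \<Longrightarrow> digit N 0 (real_of_int z) = z mod int N"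
proof -
  assume N: "N > 0"
  have "\<lfloor>real_of_int z / real N\<rfloor> = z div int N"
    by (metis floor_divide_of_int_eq of_int_of_nat_eq)
  thus ?thesis unfolding digit_def by (simp add: minus_div_mult_eq_mod[symmetric] mult.commute)
qed

lemma digit_m: "q > 0 \<Longrightarrow> m < 4*q \<Longrightarrow> digit 2 0 (real m / real (2*q)) = int (m div (2*q))"
proof -
  assume q: "q > 0" and m: "m < 4*q"
  have a: "\<lfloor>real m / real (2*q)\<rfloor> = int (m div (2*q))"
    by (metis floor_divide_of_nat_eq of_int_of_nat_eq)
  have "real m / real (2*q) / 2 = real m / (4 * real q)" by simp
  moreover have "\<lfloor>real m / (4*real q)\<rfloor> = 0" using m q by (simp add: floor_eq_iff field_simps)
  ultimately show ?thesis unfolding digit_def using a by simp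
qed

lemma gp_eq: "q > 0 \<Longrightarrow> m < 4*q \<Longrightarrow> n < 4*q \<Longrightarrow>
  gp q m n = (int m + int n * (-1) ^ (m div (2*q)) + int q * int (m div (2*q)) * int (n div (2*q))) mod int (2*q)
     + int (2*q) * ((int (m div (2*q)) + int (n div (2*q))) mod 2)"
proof -
  assume q: "q > 0" and m: "m < 4*q" and n: "n < 4*q"
  show ?thesis
  unfolding gp_def Let_def
  apply (simp only: digit_m[OF q m] digit_m[OF q n] nat_int)
  apply (subst digit_int, use q in simp)
  apply (subst digit_int, simp)
  apply simp
  done
qed


lemma mod3: "((a::int) mod N - b mod N + c) mod N = (a - b + c) mod N"
  by (metis mod_add_left_eq mod_diff_eq)

lemma modL: "((a::int) mod N - b + c) mod N = (a - b + c) mod N"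
  by (metis mod_add_left_eq mod_diff_left_eq)
lemma modL': "((a::int) - b mod N + c) mod N = (a - b + c) mod N"
  by (metis mod_add_left_eq mod_diff_right_eq)

locale dq = fixes q :: nat assumes q: "q \<ge> 1"
begin

abbreviation mul (infixl "\<star>" 70) where "m \<star> n \<equiv> nat (gp q m n)"

lemma dd_le: "m < 4*q \<Longrightarrow> m div (2*q) \<le> 1"
proof -
  assume "m < 4*q" hence "m < 2 * (2*q)" by simp
  hence "m div (2*q) < 2" by (rule less_mult_imp_div_less)
  thus ?thesis by simp
qed

lemma dd_cases: "m < 4*q \<Longrightarrow> m div (2*q) = 0 \<or> m div (2*q) = 1"
  using dd_le by fastforce

lemma gp_eq': "m < 4*q \<Longrightarrow> n < 4*q \<Longrightarrow>
  gp q m n = (int (m mod (2*q)) + (if m div (2*q) = 0 then int (n mod (2*q)) else - int (n mod (2*q)))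
     + (if m div (2*q) = 1 \<and> n div (2*q) = 1 then int q else 0)) mod int (2*q)
     + int (2*q) * int ((m div (2*q) + n div (2*q)) mod 2)"
proof -
  assume m: "m < 4*q" and n: "n < 4*q"
  have e: "(int m + int n * (-1) ^ (m div (2*q)) + int q * int (m div (2*q)) * int (n div (2*q))) mod int (2*q)
     = (int (m mod (2*q)) + (if m div (2*q) = 0 then int (n mod (2*q)) else - int (n mod (2*q)))
     + (if m div (2*q) = 1 \<and> n div (2*q) = 1 then int q else 0)) mod int (2*q)"
    using dd_cases[OF m] dd_cases[OF n]
    by (auto simp: mod_simps zmod_int mod3)
  show ?thesis using gp_eq[OF _ m n] q e by (simp add: zmod_int)
qed

lemma mul_form: "m < 4*q \<Longrightarrow> n < 4*q \<Longrightarrow>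
  m \<star> n = nat ((int (m mod (2*q)) + (if m div (2*q) = 0 then int (n mod (2*q)) else - int (n mod (2*q)))
     + (if m div (2*q) = 1 \<and> n div (2*q) = 1 then int q else 0)) mod int (2*q))
     + 2*q * ((m div (2*q) + n div (2*q)) mod 2)"
proof -
  assume m: "m < 4*q" and n: "n < 4*q"
  have "0 \<le> (int (m mod (2*q)) + (if m div (2*q) = 0 then int (n mod (2*q)) else - int (n mod (2*q)))
     + (if m div (2*q) = 1 \<and> n div (2*q) = 1 then int q else 0)) mod int (2*q)" using q by simp
  thus ?thesis using gp_eq'[OF m n] by (simp add: nat_add_distrib nat_mult_distrib)
qed

lemma split_lem: "0 \<le> (Y::int) \<Longrightarrow> Y < int (2*q) \<Longrightarrow>
   (nat Y + 2*q*e) mod (2*q) = nat Y \<and> (nat Y + 2*q*e) div (2*q) = e"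
  using q by auto

lemma mul_mod: "m < 4*q \<Longrightarrow> n < 4*q \<Longrightarrow>
  int ((m \<star> n) mod (2*q)) = (int (m mod (2*q)) + (if m div (2*q) = 0 then int (n mod (2*q)) else - int (n mod (2*q)))
     + (if m div (2*q) = 1 \<and> n div (2*q) = 1 then int q else 0)) mod int (2*q)"
  apply (subst mul_form, assumption+)
  apply (subst split_lem[THEN conjunct1])
  using q by auto

lemma mul_div: "m < 4*q \<Longrightarrow> n < 4*q \<Longrightarrow>
  (m \<star> n) div (2*q) = (m div (2*q) + n div (2*q)) mod 2"
  apply (subst mul_form, assumption+)
  apply (subst split_lem[THEN conjunct2])
  using q by auto

lemma elt_eq: "m mod (2*q) = n mod (2*q) \<Longrightarrow> m div (2*q) = n div (2*q) \<Longrightarrow> m = (n::nat)"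
  by (metis div_mult_mod_eq)

lemma mul_lt: "m < 4*q \<Longrightarrow> n < 4*q \<Longrightarrow> m \<star> n < 4*q"
proof -
  assume m: "m < 4*q" and n: "n < 4*q"
  have "m \<star> n = (m \<star> n) mod (2*q) + 2*q*((m \<star> n) div (2*q))" by simp
  also have "\<dots> < 2*q + 2*q*1" 
    apply (rule add_less_le_mono) using q apply simp
    using mul_div[OF m n] by (cases "(m div (2*q) + n div (2*q)) mod 2 = 0") (auto simp: not_mod_2_eq_0_eq_1)
  finally show ?thesis by simp
qed

lemma assoc: "m < 4*q \<Longrightarrow> n < 4*q \<Longrightarrow> k < 4*q \<Longrightarrow> (m \<star> n) \<star> k = m \<star> (n \<star> k)"
proof -
  assume m: "m < 4*q" and n: "n < 4*q" and k: "k < 4*q"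
  note l = mul_lt[OF m n] mul_lt[OF n k]
  show ?thesis
  proof (rule elt_eq)
    show "(m \<star> n \<star> k) div (2 * q) = (m \<star> (n \<star> k)) div (2 * q)"
      using l m n k by (simp add: mul_div mod_simps add.assoc)
    show "(m \<star> n \<star> k) mod (2 * q) = (m \<star> (n \<star> k)) mod (2 * q)"
    proof -
      have "int ((m \<star> n \<star> k) mod (2 * q)) = int ((m \<star> (n \<star> k)) mod (2 * q))"
        using l m n k dd_cases[OF m] dd_cases[OF n] dd_cases[OF k]
        by (auto simp only: mul_div mul_mod) (auto simp: modL modL' mod_simps mod_eq_dvd_iff)
      thus ?thesis by simp
    qed
  qed
qed

end



context dq begin

lemma carr: "carrier (Sgp q) = {0..<4*q}" and mlt: "x \<otimes>\<^bsub>Sgp q\<^esub> y = x \<star> y"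
  and one: "\<one>\<^bsub>Sgp q\<^esub> = 0"
  by (simp_all add: Sgp_def)

lemma l_one: "n < 4*q \<Longrightarrow> 0 \<star> n = n"
proof -
  assume n: "n < 4*q"
  have z: "(0::nat) < 4*q" using q by simp
  show ?thesis
  proof (rule elt_eq)
    show "(0 \<star> n) div (2*q) = n div (2*q)" using mul_div[OF z n] dd_le[OF n] by simp
    have "int ((0 \<star> n) mod (2*q)) = int (n mod (2*q))" using mul_mod[OF z n] by (simp add: zmod_int)
    thus "(0 \<star> n) mod (2*q) = n mod (2*q)" by simp
  qed
qed

lemma inv_ex: "n < 4*q \<Longrightarrow> \<exists>l<4*q. l \<star> n = 0"
proof -
  assume n: "n < 4*q"
  define l where "l = (if n div (2*q) = 0 then (2*q - n mod (2*q)) mod (2*q) else (n mod (2*q) + q) mod (2*q) + 2*q)"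
  have q0: "0 < 2*q" using q by simp
  have mm: "\<And>x. x mod (2*q) < 2*q" using q0 by simp
  have a1: "(2*q - n mod (2*q)) mod (2*q) < 2*q" by (rule mm)
  have a2: "(n mod (2*q) + q) mod (2*q) < 2*q" by (rule mm)
  have l: "l < 4*q"
  proof (cases "n div (2*q) = 0")
    case True then show ?thesis using a1 by (simp add: l_def)
  next
    case False then show ?thesis using a2 by (simp add: l_def)
  qed
  have z: "(0::nat) < 4*q" using q by simp
  have ld: "l div (2*q) = n div (2*q)" "l mod (2*q) = (if n div (2*q) = 0 then (2*q - n mod (2*q)) mod (2*q) else (n mod (2*q) + q) mod (2*q))"
    unfolding l_def using q dd_cases[OF n] by auto
  have "l \<star> n = 0"
  proof (rule elt_eq)
    show "(l \<star> n) div (2*q) = 0 div (2*q)" using mul_div[OF l n] dd_cases[OF n] ld by auto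
    have "int ((l \<star> n) mod (2*q)) = 0"
      using mul_mod[OF l n] dd_cases[OF n] ld q0
      by (auto simp: zmod_int of_nat_diff mod_simps modL)
    thus "(l \<star> n) mod (2*q) = 0 mod (2*q)" by simp
  qed
  thus ?thesis using l by blast
qed

lemma grp: "group (Sgp q)"
proof (rule groupI)
  fix x assume "x \<in> carrier (Sgp q)"
  then obtain l where "l < 4*q" "l \<star> x = 0" using inv_ex by (auto simp: carr)
  thus "\<exists>y\<in>carrier (Sgp q). y \<otimes>\<^bsub>Sgp q\<^esub> x = \<one>\<^bsub>Sgp q\<^esub>" by (auto simp: carr mlt one)
qed (use q in \<open>auto simp: carr mlt one mul_lt assoc l_one\<close>)

end


context dq begin

lemma mulE: "r1 < 2*q \<Longrightarrow> r2 < 2*q \<Longrightarrow> d1 \<le> 1 \<Longrightarrow> d2 \<le> 1 \<Longrightarrow>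
  (r1 + 2*q*d1) \<star> (r2 + 2*q*d2) = nat ((int r1 + (if d1 = 0 then int r2 else - int r2)
     + (if d1 = 1 \<and> d2 = 1 then int q else 0)) mod int (2*q)) + 2*q * ((d1 + d2) mod 2)"
proof -
  assume a: "r1 < 2*q" "r2 < 2*q" "d1 \<le> 1" "d2 \<le> 1"
  have l1: "r1 + 2*q*d1 < 4*q" "r2 + 2*q*d2 < 4*q" using a by (auto simp: le_Suc_eq)
  have "(r1 + 2*q*d1) mod (2*q) = r1" "(r1 + 2*q*d1) div (2*q) = d1"
       "(r2 + 2*q*d2) mod (2*q) = r2" "(r2 + 2*q*d2) div (2*q) = d2" using a by auto
  thus ?thesis using mul_form[OF l1] by simp
qed

end
context dq begin
lemma q2: "1 < 2*q" using q by simp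

lemma pow1: "(1::nat) [^]\<^bsub>Sgp q\<^esub> (k::nat) = k mod (2*q)"
proof (induction k)
  case 0 then show ?case by (simp add: one)
next
  case (Suc k)
  have e: "(k mod (2*q)) \<star> 1 = nat ((int (k mod (2*q)) + 1) mod int (2*q))"
    using mulE[of "k mod (2*q)" 1 0 0] q2 by simp
  have "(int (k mod (2*q)) + 1) mod int (2*q) = int (Suc k mod (2*q))"
    by (metis Suc_eq_plus1 mod_Suc_eq of_nat_1 of_nat_add zmod_int)
  hence "(k mod (2*q)) \<star> 1 = Suc k mod (2*q)" using e by simp
  thus ?case using Suc by (simp add: mlt)
qed
lemma xx: "(2*q) \<star> (2*q) = q" using mulE[of 0 0 1 1] q by simp
lemma rx: "r < 2*q \<Longrightarrow> r \<star> (2*q) = r + 2*q" using mulE[of r 0 0 1] by simp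
lemma ax: "1 \<star> (2*q) = 2*q + 1" using rx[OF q2] by simp
lemma xinv: "(3*q) \<star> (2*q) = 0"
proof -
  have "3*q = q + 2*q*1" by simp
  thus ?thesis using mulE[of q 0 1 1] q by simp
qed
lemma xa: "(2*q) \<star> 1 = 4*q - 1"
proof -
  have "(-1::int) mod (2 * int q) = 2 * int q - 1" by (rule zmod_minus1, use q2 in simp)
  thus ?thesis using mulE[of 0 1 1 0] q2 by simp
qed
lemma c4: "(4*q - 1) \<star> (3*q) = 2*q - 1"
proof -
  have e: "4*q - 1 = (2*q - 1) + 2*q*1" "3*q = q + 2*q*1" using q by auto
  have "(int (2*q - 1) - int q + int q) mod int (2*q) = int (2*q - 1)" using q2 by (simp add: zmod_minus1)
  thus ?thesis unfolding e using mulE[of "2*q - 1" q 1 1] q2 by simp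
qed
lemma ainv: "(2*q - 1) \<star> 1 = 0"
proof -
  have "(int (2*q - 1) + 1) mod int (2*q) = 0" using q2 by (simp add: of_nat_diff)
  thus ?thesis using mulE[of "2*q - 1" 1 0 0] q2 by simp
qed

lemma carrI: "m < 4*q \<Longrightarrow> m \<in> carrier (Sgp q)" by (simp add: carr)

lemma rels: "dicyclic_rels (Sgp q) 1 (2*q) q"
proof -
  interpret G: group "Sgp q" by (rule grp)
  have c1: "1 \<in> carrier (Sgp q)" and c2: "2*q \<in> carrier (Sgp q)" and c3: "3*q \<in> carrier (Sgp q)"
    and c4': "2*q - 1 \<in> carrier (Sgp q)" using q by (auto simp: carr)
  have ix: "inv\<^bsub>Sgp q\<^esub> (2*q) = 3*q" by (rule G.inv_equality) (use xinv c2 c3 in \<open>simp_all add: mlt one\<close>)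
  have ia: "inv\<^bsub>Sgp q\<^esub> 1 = 2*q - 1" by (rule G.inv_equality) (use ainv c1 c4' in \<open>simp_all add: mlt one\<close>)
  have l2: "0 \<star> (2*q) = 2*q" using l_one q by simp
  have p1: "(1::nat) [^]\<^bsub>Sgp q\<^esub> (2*q) = \<one>\<^bsub>Sgp q\<^esub>" unfolding pow1 one by simp
  have p2: "(2*q) [^]\<^bsub>Sgp q\<^esub> (2::nat) = (1::nat) [^]\<^bsub>Sgp q\<^esub> q"
  proof -
    have sq: "\<And>z. z [^]\<^bsub>Sgp q\<^esub> (2::nat) = \<one>\<^bsub>Sgp q\<^esub> \<otimes>\<^bsub>Sgp q\<^esub> z \<otimes>\<^bsub>Sgp q\<^esub> z"
      by (simp add: numeral_2_eq_2)
    show ?thesis unfolding sq pow1 one mlt l2 xx using q by simp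
  qed
  have p3: "(2*q) \<otimes>\<^bsub>Sgp q\<^esub> 1 \<otimes>\<^bsub>Sgp q\<^esub> inv\<^bsub>Sgp q\<^esub> (2*q) = inv\<^bsub>Sgp q\<^esub> 1"
    unfolding ix ia mlt xa c4 ..
  show ?thesis unfolding dicyclic_rels_def using c1 c2 p1 p2 p3 by blast
qed

lemma gen: "generate (Sgp q) {1, 2*q} = carrier (Sgp q)"
proof
  interpret G: group "Sgp q" by (rule grp)
  show "generate (Sgp q) {1, 2 * q} \<subseteq> carrier (Sgp q)"
    by (rule G.generate_incl) (use q in \<open>simp add: carr\<close>)
  have p: "(1::nat) [^]\<^bsub>Sgp q\<^esub> (k::nat) \<in> generate (Sgp q) {1, 2 * q}" for k
  proof (induction k)
    case 0 then show ?case by (simp add: generate.one)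
  next
    case (Suc k) then show ?case by (simp add: generate.eng generate.incl)
  qed
  show "carrier (Sgp q) \<subseteq> generate (Sgp q) {1, 2 * q}"
  proof
    fix m assume "m \<in> carrier (Sgp q)"
    hence m: "m < 4*q" by (simp add: carr)
    have r: "m mod (2*q) < 2*q" using q by simp
    have pr: "m mod (2*q) \<in> generate (Sgp q) {1, 2 * q}" using p[of "m mod (2*q)"] unfolding pow1 mod_mod_trivial .
    from dd_cases[OF m] show "m \<in> generate (Sgp q) {1, 2 * q}"
    proof
      assume "m div (2*q) = 0" thus ?thesis using pr by (metis add_0 div_mult_mod_eq mult_0)
    next
      assume d: "m div (2*q) = 1"
      have "m = m mod (2*q) \<star> (2*q)" using rx[OF r] d by (metis div_mult_mod_eq add.commute mult_1)
      moreover have "m mod (2*q) \<star> (2*q) \<in> generate (Sgp q) {1, 2 * q}"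
        using generate.eng[OF pr generate.incl[of "2*q" "{1, 2*q}"]] by (simp add: mlt)
      ultimately show ?thesis by simp
    qed
  qed
qed

lemma noncomm: "q \<ge> 2 \<Longrightarrow> \<not> comm_group (Sgp q)"
proof
  assume "q \<ge> 2" "comm_group (Sgp q)"
  then interpret C: comm_group "Sgp q" by simp
  have "1 \<otimes>\<^bsub>Sgp q\<^esub> (2*q) = (2*q) \<otimes>\<^bsub>Sgp q\<^esub> 1"
    by (rule C.m_comm) (use carrI q in auto)
  hence "2*q + 1 = 4*q - 1" unfolding mlt ax xa .
  thus False using \<open>q \<ge> 2\<close> by simp
qed

lemma univ:
  fixes H :: "('c, 'd) monoid_scheme"
  assumes "group H" "dicyclic_rels H b y q"
  shows "\<exists>h\<in>hom (Sgp q) H. h 1 = b \<and> h (2*q) = y"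
proof -
  interpret H: group H by (rule assms(1))
  have b: "b \<in> carrier H" and y: "y \<in> carrier H" and bN: "b [^]\<^bsub>H\<^esub> (2*q) = \<one>\<^bsub>H\<^esub>"
    and y2: "y [^]\<^bsub>H\<^esub> (2::nat) = b [^]\<^bsub>H\<^esub> q"
    and r: "y \<otimes>\<^bsub>H\<^esub> b \<otimes>\<^bsub>H\<^esub> inv\<^bsub>H\<^esub> y = inv\<^bsub>H\<^esub> b"
    using assms(2) unfolding dicyclic_rels_def by auto
  have yy: "y \<otimes>\<^bsub>H\<^esub> y = b [^]\<^bsub>H\<^esub> q" using y2 y by (simp add: numeral_2_eq_2)
  have yb: "y \<otimes>\<^bsub>H\<^esub> b = inv\<^bsub>H\<^esub> b \<otimes>\<^bsub>H\<^esub> y"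
  proof -
    have "y \<otimes>\<^bsub>H\<^esub> b = (y \<otimes>\<^bsub>H\<^esub> b \<otimes>\<^bsub>H\<^esub> inv\<^bsub>H\<^esub> y) \<otimes>\<^bsub>H\<^esub> y"
      using b y by (simp add: H.m_assoc)
    thus ?thesis using r by simp
  qed
  have q0: "q > 0" using q by simp
  define h where "h m = b [^]\<^bsub>H\<^esub> (m mod (2*q)) \<otimes>\<^bsub>H\<^esub> y [^]\<^bsub>H\<^esub> (m div (2*q))" for m
  have "h \<in> hom (Sgp q) H"
  proof (rule homI)
    fix m assume "m \<in> carrier (Sgp q)" thus "h m \<in> carrier H" using b y by (simp add: h_def)
  next
    fix m n assume "m \<in> carrier (Sgp q)" "n \<in> carrier (Sgp q)"
    hence m: "m < 4*q" and n: "n < 4*q" by (auto simp: carr)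
    have md: "(m \<star> n) mod (2*q) = nat ((int (m mod (2*q)) + (if m div (2*q) = 0 then int (n mod (2*q)) else - int (n mod (2*q)))
     + (if m div (2*q) = 1 \<and> n div (2*q) = 1 then int q else 0)) mod int (2*q))"
      using mul_mod[OF m n] by linarith
    show "h (m \<otimes>\<^bsub>Sgp q\<^esub> n) = h m \<otimes>\<^bsub>H\<^esub> h n"
      unfolding mlt h_def md mul_div[OF m n]
      by (rule H.dic_mul[OF b y q0 bN yy yb dd_le[OF m] dd_le[OF n]])
  qed
  moreover have "h 1 = b" "h (2*q) = y" using b y q2 by (auto simp: h_def)
  ultimately show ?thesis by blast
qed

end

theorem mainTheorem6:
  fixes q :: nat
  assumes "q \<ge> 1"
  shows "group (Sgp q) \<and> order (Sgp q) = 4 * q \<and>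
    (\<exists>a x. dicyclic_rels (Sgp q) a x q \<and>
       generate (Sgp q) {a, x} = carrier (Sgp q) \<and>
       (\<forall>(H :: ('c, 'd) monoid_scheme) b y. group H \<and> dicyclic_rels H b y q \<longrightarrow>
          (\<exists>h \<in> hom (Sgp q) H. h a = b \<and> h x = y))) \<and>
    (q \<ge> 2 \<longrightarrow> \<not> comm_group (Sgp q))"
proof -
  interpret dq q using assms by unfold_locales
  have o: "order (Sgp q) = 4 * q" by (simp add: order_def carr)
  have u: "\<forall>(H :: ('c, 'd) monoid_scheme) b y. group H \<and> dicyclic_rels H b y q \<longrightarrow>
          (\<exists>h \<in> hom (Sgp q) H. h 1 = b \<and> h (2*q) = y)"
  proof (intro allI impI)
    fix H :: "('c, 'd) monoid_scheme" and b y
    assume a: "group H \<and> dicyclic_rels H b y q"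
    show "\<exists>h \<in> hom (Sgp q) H. h 1 = b \<and> h (2*q) = y" using univ[OF conjunct1[OF a] conjunct2[OF a]] .
  qed
  have e: "\<exists>a x. dicyclic_rels (Sgp q) a x q \<and>
       generate (Sgp q) {a, x} = carrier (Sgp q) \<and>
       (\<forall>(H :: ('c, 'd) monoid_scheme) b y. group H \<and> dicyclic_rels H b y q \<longrightarrow>
          (\<exists>h \<in> hom (Sgp q) H. h a = b \<and> h x = y))"
    apply (rule exI[of _ 1], rule exI[of _ "2*q"])
    using rels gen u by (intro conjI)
  show ?thesis using grp o e noncomm by (intro conjI) auto
qed
end
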